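(* Let $S_A>0$, $c_{\mathrm{TX}}>0$, $\phi>0$, $\theta=\phi/c_{\mathrm{TX}}$, let $B\geq 1$ be an integer, and let $\lambda$ satisfy $$0<\lambda\leq \lambda_{\mathrm{th}}\triangleq\frac{1}{\left(\sqrt{1+1/S_A}+\sqrt{\theta}\right)^2}.$$ Define $v_{\mathrm{th}}(\lambda,-1)\triangleq 0$, $t^*\triangleq\left\lceil\sqrt{\frac{1}{\lambda S_A}+\frac{1}{4}}-\frac{3}{2}\right\rceil$, and for integers $0\leq t\leq t^*$, $$v_{\mathrm{th}}(\lambda,t)\triangleq \frac{\sqrt{\lambda\theta}+\lambda\left(t+\frac{1}{2}\right)}{1-\lambda (t+1)tS_A}+\frac{\sqrt{\lambda}\sqrt{\sqrt{\lambda\theta}(2t+1)+\lambda \theta(t+1)tS_A+\frac{\lambda}{4}+\frac{1}{S_A}}}{1-\lambda(t+1)tS_A}.$$ Let $V_k\in(0,1]$ and let $(t^{(MP)}(V_k),S_M^{(MP)}(V_k))$ denote the myopic policy, i.e. a (possibly randomized among minimizers) minimizer over $t\in\{0,1,\dots,B\}$, $S_M\geq 0$ of $$F(t,S_M)=\hat\nu\left(V_k,\frac{tS_AS_M}{S_A+S_M}\right)+\lambda t(1+\theta S_M),\qquad \hat\nu(V,\Lambda)=\frac{V}{1+V\Lambda}.$$ Then: (i) if $V_k>v_{\mathrm{th}}(\lambda,t^* )$, then $t^{(MP)}(V_k)=\min\{t^*+1,B\}$; (ii) if $V_k=v_{\mathrm{th}}(\lambda,\hat t)$ for some $\hat t\in\{0,1,\dots,t^*\}$,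 then $t^{(MP)}(V_k)=\min\{\hat t+1,B\}$ with probability $p_{\hat t}$ and $t^{(MP)}(V_k)=\min\{\hat t,B\}$ otherwise, for some $p_{\hat t}\in[0,1]$ (both values minimize $F$); (iii) otherwise, $t^{(MP)}(V_k)=\min\{\hat t,B\}$, where $\hat t$ is the unique element of $\{0,1,\dots,t^*\}$ with $v_{\mathrm{th}}(\lambda,\hat t-1)<V_k<v_{\mathrm{th}}(\lambda,\hat t)$; (iv) in all cases, $$S_M^{(MP)}(V_k)=\left(\frac{1}{\sqrt{\lambda\theta}}-\frac{1}{V_k}\right)^+\frac{S_AV_k}{1+t^{(MP)}(V_k)S_AV_k}.$$
   Context: Model: a fusion center estimates a scalar Gaussian process; $V_k$ is the prior variance of the state at slot $k$. In the coordinated scheme (all sensors in the best accuracy state), the fusion center activates $t$ sensors, each measuring with local measurement SNR $S_M$; the aggregate SNR collected is $tS_AS_M/(S_A+S_M)$, where $S_A$ is the ambient SNR; the resulting posterior variance is $\hat\nu(V_k,\Lambda)=V_k/(1+V_k\Lambda)$. Each active sensor incurs cost $c_{\mathrm{TX}}+\phi S_M$; $\lambda\geq 0$ is a Lagrange multiplier, and the normalized cost of $t$ active sensors is $\lambda t(1+\theta S_M)$. $(x)^+=\max\{x,0\}$ and $\lceil\cdot\rceil$ is the ceiling. *)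

theory Defs
  imports Complex_Main
begin

definition nu_hat :: "real \<Rightarrow> real \<Rightarrow> real" where
  "nu_hat V L = V / (1 + V * L)"

definition F_obj :: "real \<Rightarrow> real \<Rightarrow> real \<Rightarrow> real \<Rightarrow> nat \<Rightarrow> real \<Rightarrow> real" where
  "F_obj SA lam theta V t SM =
     nu_hat V (real t * SA * SM / (SA + SM)) + lam * real t * (1 + theta * SM)"

definition is_myopic :: "real \<Rightarrow> real \<Rightarrow> real \<Rightarrow> nat \<Rightarrow> real \<Rightarrow> nat \<Rightarrow> real \<Rightarrow> bool" where
  "is_myopic SA lam theta B V t SM \<longleftrightarrow>
     t \<le> B \<and> SM \<ge> 0 \<and>
     (\<forall>t'. \<forall>SM'. t' \<le> B \<longrightarrow> SM' \<ge> 0 \<longrightarrow>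
        F_obj SA lam theta V t SM \<le> F_obj SA lam theta V t' SM')"

definition lam_th :: "real \<Rightarrow> real \<Rightarrow> real" where
  "lam_th SA theta = 1 / (sqrt (1 + 1 / SA) + sqrt theta) ^ 2"

definition t_star :: "real \<Rightarrow> real \<Rightarrow> int" where
  "t_star SA lam = \<lceil>sqrt (1 / (lam * SA) + 1/4) - 3/2\<rceil>"

definition v_th :: "real \<Rightarrow> real \<Rightarrow> real \<Rightarrow> int \<Rightarrow> real" where
  "v_th SA theta lam t =
     (if t = -1 then 0 else
      (sqrt (lam * theta) + lam * (real_of_int t + 1/2)) /
         (1 - lam * (real_of_int t + 1) * real_of_int t * SA)
      + sqrt lam * sqrt (sqrt (lam * theta) * (2 * real_of_int t + 1)
            + lam * theta * (real_of_int t + 1) * real_of_int t * SA + lam / 4 + 1 / SA) /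
         (1 - lam * (real_of_int t + 1) * real_of_int t * SA))"

definition pos_part :: "real \<Rightarrow> real" where
  "pos_part x = max x 0"

definition SM_formula :: "real \<Rightarrow> real \<Rightarrow> real \<Rightarrow> real \<Rightarrow> nat \<Rightarrow> real" where
  "SM_formula SA lam theta V t =
     pos_part (1 / sqrt (lam * theta) - 1 / V) * (SA * V / (1 + real t * SA * V))"

end

theory Submission
  imports Defs
begin

definition Gf :: "real \<Rightarrow> real \<Rightarrow> real \<Rightarrow> real \<Rightarrow> nat \<Rightarrow> real" where
  "Gf SA lam theta V t = V + lam * real t
     - (pos_part (V - sqrt (lam * theta)))^2 * (real t * SA / (1 + real t * SA * V))"

lemma F_expand:
  assumes "SA > 0" "V > 0" "x \<ge> 0"
  shows "F_obj SA lam theta V t x =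
    V*(SA+x)/(SA + (1 + real t*SA*V)*x) + lam*real t + lam*theta*real t*x"
proof -
  have p: "SA + x > 0" using assms by simp
  have q: "SA + (1 + real t*SA*V)*x > 0" using assms
    by (smt (verit) mult_nonneg_nonneg of_nat_0_le_iff)
  have "SA + x + V * (real t * SA * x) = SA + (1 + real t*SA*V)*x"
    by (simp add: algebra_simps)
  then show ?thesis using p q unfolding F_obj_def nu_hat_def
    by (simp add: field_simps)
qed

lemma ident_gt:
  fixes SA V x t s lam lt :: real
  assumes "SA > 0" "V > 0" "x \<ge> 0" "t \<ge> 0" "s > 0" "lt = s^2"
  defines "a \<equiv> 1 + t*SA*V" and "y \<equiv> SA + (1 + t*SA*V)*x"
  shows "V*(SA+x)/y + lam*t + lt*t*x - (V + lam*t - (V-s)^2*(t*SA/a))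
     = t*(s*y - V*SA)^2/(a*y)"
proof -
  have a: "a > 0" unfolding a_def using assms by (simp add: add_pos_nonneg)
  have y: "y > 0" unfolding y_def using assms
    by (smt (verit) mult_nonneg_nonneg)
  have x: "x = (y - SA)/a" using a unfolding y_def a_def by (simp add: field_simps)
  show ?thesis using a y unfolding x assms(6)
    apply (simp add: field_simps)
    unfolding a_def y_def
    apply (simp add: algebra_simps power2_eq_square)
    done
qed


lemma ident_le:
  fixes SA V x t s lam lt :: real
  assumes "SA > 0" "V > 0" "x \<ge> 0" "t \<ge> 0" "lt = s^2"
  defines "y \<equiv> SA + (1 + t*SA*V)*x"
  shows "V*(SA+x)/y + lam*t + lt*t*x - (V + lam*t) = t*x*(s^2*y - V^2*SA)/y"
proof -
  have y: "y > 0" unfolding y_def using assms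
    by (smt (verit) mult_nonneg_nonneg)
  show ?thesis using y unfolding assms(5)
    apply (simp add: field_simps)
    unfolding y_def
    apply (simp add: algebra_simps power2_eq_square)
    done
qed

lemma SMf_nonneg:
  assumes "SA > 0" "V > 0"
  shows "SM_formula SA lam theta V t \<ge> 0"
  unfolding SM_formula_def pos_part_def using assms
  by (simp add: add_pos_nonneg)

lemma Fmin:
  assumes SA: "SA > 0" and V: "V > 0" and lam: "lam > 0" and th: "theta > 0"
  shows "\<And>x. x \<ge> 0 \<Longrightarrow> Gf SA lam theta V t \<le> F_obj SA lam theta V t x"
    and "F_obj SA lam theta V t (SM_formula SA lam theta V t) = Gf SA lam theta V t"
    and "\<And>x. t \<ge> 1 \<Longrightarrow> x \<ge> 0 \<Longrightarrow> F_obj SA lam theta V t x = Gf SA lam theta V t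
           \<Longrightarrow> x = SM_formula SA lam theta V t"
proof -
  define s where "s = sqrt (lam*theta)"
  have s: "s > 0" "lam*theta = s^2" unfolding s_def using lam th by auto
  define a where "a = 1 + real t*SA*V"
  have a: "a \<ge> 1" unfolding a_def using SA V by simp
  define y where "y = (\<lambda>x. SA + a*x)"
  have y: "\<And>x. x \<ge> 0 \<Longrightarrow> y x \<ge> SA" unfolding y_def using a by simp
  have Fe: "\<And>x. x \<ge> 0 \<Longrightarrow> F_obj SA lam theta V t x = V*(SA+x)/y x + lam*real t + (lam*theta)*real t*x"
    unfolding y_def a_def using F_expand[OF SA V] by simp
  have "(\<forall>x. x \<ge> 0 \<longrightarrow> Gf SA lam theta V t \<le> F_obj SA lam theta V t x)
    \<and> F_obj SA lam theta V t (SM_formula SA lam theta V t) = Gf SA lam theta V t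
    \<and> (\<forall>x. t \<ge> 1 \<longrightarrow> x \<ge> 0 \<longrightarrow> F_obj SA lam theta V t x = Gf SA lam theta V t
           \<longrightarrow> x = SM_formula SA lam theta V t)"
  proof (cases "V > s")
    case True
    have G: "Gf SA lam theta V t = V + lam*real t - (V-s)^2*(real t*SA/a)"
      unfolding Gf_def pos_part_def s_def[symmetric] a_def using True by simp
    have D: "\<And>x. x \<ge> 0 \<Longrightarrow> F_obj SA lam theta V t x - Gf SA lam theta V t
       = real t*(s*y x - V*SA)^2/(a*y x)"
      unfolding G Fe using ident_gt[OF SA V _ _ s(1) s(2), of _ "real t" lam]
      unfolding a_def y_def by simp
    have ypos: "\<And>x. x \<ge> 0 \<Longrightarrow> y x > 0" using y SA by (meson less_le_trans)
    have SMf: "SM_formula SA lam theta V t = SA*(V-s)/(s*a)"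
    proof -
      have "1/s - 1/V > 0" using True s V by (simp add: field_simps)
      then show ?thesis unfolding SM_formula_def pos_part_def s_def[symmetric] a_def[symmetric]
        using s V a by (simp add: field_simps)
    qed
    have ySM: "s * y (SM_formula SA lam theta V t) = V*SA"
      unfolding SMf y_def using s a by (simp add: field_simps)
    have SM0: "SM_formula SA lam theta V t \<ge> 0" using SMf_nonneg[OF SA V] .
    show ?thesis
    proof (intro conjI allI impI)
      fix x :: real assume x: "x \<ge> 0"
      have "real t*(s*y x - V*SA)^2/(a*y x) \<ge> 0" using ypos[OF x] a by simp
      then show "Gf SA lam theta V t \<le> F_obj SA lam theta V t x" using D[OF x] by simp
    next
      show "F_obj SA lam theta V t (SM_formula SA lam theta V t) = Gf SA lam theta V t"
        using D[OF SM0] ySM by simp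
    next
      fix x :: real assume t: "t \<ge> 1" and x: "x \<ge> 0" and e: "F_obj SA lam theta V t x = Gf SA lam theta V t"
      have "real t*(s*y x - V*SA)^2/(a*y x) = 0" using D[OF x] e by simp
      then have "s*y x = V*SA" using t ypos[OF x] a by simp
      then have "s * y x = s * y (SM_formula SA lam theta V t)" using ySM by simp
      then have "y x = y (SM_formula SA lam theta V t)" using s by simp
      then show "x = SM_formula SA lam theta V t" unfolding y_def using a by simp
    qed
  next
    case False
    have G: "Gf SA lam theta V t = V + lam*real t"
      unfolding Gf_def pos_part_def s_def[symmetric] using False by simp
    have SMf: "SM_formula SA lam theta V t = 0"
    proof -
      have "1/s - 1/V \<le> 0" using False s V by (simp add: field_simps)
      then show ?thesis unfolding SM_formula_def pos_part_def s_def[symmetric] by simp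
    qed
    have D: "\<And>x. x \<ge> 0 \<Longrightarrow> F_obj SA lam theta V t x - Gf SA lam theta V t
       = real t*x*(s^2*y x - V^2*SA)/y x"
      unfolding G Fe using ident_le[OF SA V _ _ s(2), of _ "real t" lam]
      unfolding a_def y_def by simp
    have ypos: "\<And>x. x \<ge> 0 \<Longrightarrow> y x > 0" using y SA by (meson less_le_trans)
    have sV: "V^2 \<le> s^2" using False V by (simp add: power_mono)
    have key: "\<And>x. x \<ge> 0 \<Longrightarrow> s^2*y x - V^2*SA \<ge> 0"
    proof -
      fix x :: real assume x: "x \<ge> 0"
      have "V^2*SA \<le> s^2*SA" using sV SA by simp
      also have "\<dots> \<le> s^2 * y x" using y[OF x] by (simp add: mult_left_mono)
      finally show "s^2*y x - V^2*SA \<ge> 0" by simp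
    qed
    show ?thesis
    proof (intro conjI allI impI)
      fix x :: real assume x: "x \<ge> 0"
      have "real t*x*(s^2*y x - V^2*SA)/y x \<ge> 0" using ypos[OF x] key[OF x] x by simp
      then show "Gf SA lam theta V t \<le> F_obj SA lam theta V t x" using D[OF x] by simp
    next
      show "F_obj SA lam theta V t (SM_formula SA lam theta V t) = Gf SA lam theta V t"
        using D[of 0] SMf by simp
    next
      fix x :: real assume t: "t \<ge> 1" and x: "x \<ge> 0" and e: "F_obj SA lam theta V t x = Gf SA lam theta V t"
      have "real t*x*(s^2*y x - V^2*SA)/y x = 0" using D[OF x] e by simp
      then have z: "x = 0 \<or> s^2*y x = V^2*SA" using t ypos[OF x] by simp
      show "x = SM_formula SA lam theta V t"
      proof (rule ccontr)
        assume "x \<noteq> SM_formula SA lam theta V t"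
        then have xp: "x > 0" using x SMf by simp
        then have "y x > SA" unfolding y_def using a by (smt (verit) mult_le_cancel_right1)
        then have "s^2 * y x > s^2*SA" using s by simp
        moreover have "V^2*SA \<le> s^2*SA" using sV SA by simp
        ultimately show False using z xp by simp
      qed
    qed
  qed
  then show "\<And>x. x \<ge> 0 \<Longrightarrow> Gf SA lam theta V t \<le> F_obj SA lam theta V t x"
    and "F_obj SA lam theta V t (SM_formula SA lam theta V t) = Gf SA lam theta V t"
    and "\<And>x. t \<ge> 1 \<Longrightarrow> x \<ge> 0 \<Longrightarrow> F_obj SA lam theta V t x = Gf SA lam theta V t
           \<Longrightarrow> x = SM_formula SA lam theta V t" by auto
qed


lemma quad_ident:
  fixes SA lam theta t V s w :: real
  assumes SA: "SA > 0" and s2: "lam*theta = s^2"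
    and w2: "w^2 = lam * (s*(2*t+1) + lam*theta*(t+1)*t*SA + lam/4 + 1/SA)"
  defines "D \<equiv> 1 - lam*(t+1)*t*SA" and "m \<equiv> s + lam*(t+1/2)"
  shows "SA*((D*V-m)^2 - w^2) = D*(SA*(V-s)^2 - lam*((1+t*SA*V)*(1+(t+1)*SA*V)))"
proof -
  have "SA * w^2 = lam*SA*s*(2*t+1) + lam*s^2*(t+1)*t*SA*SA + lam*lam*SA/4 + lam"
    unfolding w2 s2[symmetric] using SA by (simp add: field_simps)
  then show ?thesis unfolding D_def m_def
    by (simp add: algebra_simps power2_eq_square)
qed

lemma signB:
  fixes SA lam theta t V :: real
  assumes SA: "SA > 0" and lam: "lam > 0" and th: "theta > 0" and t: "t \<ge> 0"
    and Dp: "lam*(t+1)*t*SA < 1" and V: "V > 0"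
  defines "v \<equiv> (sqrt (lam * theta) + lam * (t + 1/2)) / (1 - lam * (t + 1) * t * SA)
      + sqrt lam * sqrt (sqrt (lam * theta) * (2 * t + 1)
            + lam * theta * (t + 1) * t * SA + lam / 4 + 1 / SA) / (1 - lam * (t + 1) * t * SA)"
    and "P \<equiv> pos_part (V - sqrt (lam*theta))"
    and "Q \<equiv> (1+t*SA*V)*(1+(t+1)*SA*V)"
  shows "(P^2*SA > lam*Q \<longleftrightarrow> V > v) \<and> (P^2*SA = lam*Q \<longleftrightarrow> V = v)"
proof -
  define s where "s = sqrt (lam*theta)"
  have s: "s > 0" "lam*theta = s^2" unfolding s_def using lam th by auto
  define K where "K = s*(2*t+1) + lam*theta*(t+1)*t*SA + lam/4 + 1/SA"
  have K: "K \<ge> 0" unfolding K_def using s SA lam th t by (simp add: add_nonneg_nonneg)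
  define w where "w = sqrt lam * sqrt K"
  have w: "w \<ge> 0" "w^2 = lam*K" unfolding w_def using lam K
    by (auto simp: power_mult_distrib)
  define D where "D = 1 - lam*(t+1)*t*SA"
  have D: "D > 0" unfolding D_def using Dp by simp
  define m where "m = s + lam*(t+1/2)"
  define r1 where "r1 = (m+w)/D"
  define r2 where "r2 = (m-w)/D"
  have v: "v = r1" unfolding v_def r1_def s_def[symmetric] K_def[symmetric] w_def[symmetric]
    D_def[symmetric] m_def[symmetric] by (simp add: add_divide_distrib)
  have Qp: "\<And>V. V > 0 \<Longrightarrow> (1+t*SA*V)*(1+(t+1)*SA*V) > 0" using SA t
    by (simp add: add_pos_nonneg)
  have id: "\<And>V. SA*(V-s)^2 - lam*((1+t*SA*V)*(1+(t+1)*SA*V)) = SA*D*((V-r1)*(V-r2))"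
  proof -
    fix V
    have e: "SA*((D*V-m)^2 - w^2) = D*(SA*(V-s)^2 - lam*((1+t*SA*V)*(1+(t+1)*SA*V)))"
      using quad_ident[OF SA s(2), of w t V] w(2) unfolding K_def D_def m_def by simp
    have "(V-r1)*(V-r2) = ((D*V-m)^2 - w^2)/D^2" unfolding r1_def r2_def using D
      by (simp add: field_simps power2_eq_square)
    then have "SA*D*((V-r1)*(V-r2)) = (SA*((D*V-m)^2 - w^2))/D" using D
      by (simp add: power2_eq_square)
    also have "\<dots> = SA*(V-s)^2 - lam*((1+t*SA*V)*(1+(t+1)*SA*V))" unfolding e using D by simp
    finally show "SA*(V-s)^2 - lam*((1+t*SA*V)*(1+(t+1)*SA*V)) = SA*D*((V-r1)*(V-r2))" by simp
  qed
  have "SA*D*((s-r1)*(s-r2)) < 0" using id[of s] mult_pos_pos[OF lam Qp[OF s(1)]] by simp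
  then have neg: "(s-r1)*(s-r2) < 0" using SA D
    by (metis mult_pos_pos not_less_iff_gr_or_eq mult_less_0_iff)
  have r12: "r2 \<le> r1" unfolding r1_def r2_def using w D by (simp add: divide_right_mono)
  have sr: "r2 < s" "s < r1" using neg r12
    by (auto simp: mult_less_0_iff)
  show ?thesis
  proof (cases "V > s")
    case True
    have P: "P = V - s" unfolding P_def s_def[symmetric] pos_part_def using True by simp
    have "P^2*SA - lam*Q = SA*D*((V-r1)*(V-r2))" using id[of V] unfolding P Q_def
      by (simp add: algebra_simps)
    moreover have "V - r2 > 0" using True sr by simp
    ultimately have eq: "P^2*SA - lam*Q = (SA*D)*((V-r1)*(V-r2))" and r2: "V - r2 > 0" by simp_all
    have c: "SA*D > 0" using SA D by simp
    have e1: "P^2*SA > lam*Q \<longleftrightarrow> (SA*D)*((V-r1)*(V-r2)) > 0" using eq by linarith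
    have e2: "P^2*SA = lam*Q \<longleftrightarrow> (SA*D)*((V-r1)*(V-r2)) = 0" using eq by linarith
    have e3a: "(SA*D)*((V-r1)*(V-r2)) > 0 \<longleftrightarrow> (V-r1)*(V-r2) > 0"
      using c by (metis mult_pos_pos zero_less_mult_pos)
    have e3b: "(V-r1)*(V-r2) > 0 \<longleftrightarrow> V - r1 > 0"
      using r2 by (metis mult_pos_pos zero_less_mult_pos2)
    have e3: "(SA*D)*((V-r1)*(V-r2)) > 0 \<longleftrightarrow> V - r1 > 0" using e3a e3b by simp
    have e4: "(SA*D)*((V-r1)*(V-r2)) = 0 \<longleftrightarrow> V - r1 = 0"
      using c r2 SA D by simp
    show ?thesis unfolding v e1 e2 e3 e4 by auto
  next
    case False
    have P: "P = 0" unfolding P_def s_def[symmetric] pos_part_def using False by simp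
    have "lam*Q > 0" unfolding Q_def using Qp[OF V] lam by simp
    then show ?thesis unfolding P v using False sr by auto
  qed
qed

lemma signC:
  fixes SA lam theta t V :: real
  assumes SA: "SA > 0" and lam: "lam > 0" and th: "theta > 0" and t: "t \<ge> 0"
    and Dn: "lam*(t+1)*t*SA \<ge> 1" and V: "V > 0"
  shows "(pos_part (V - sqrt (lam*theta)))^2*SA < lam*((1+t*SA*V)*(1+(t+1)*SA*V))"
proof -
  define s where "s = sqrt (lam*theta)"
  have s: "s > 0" unfolding s_def using lam th by auto
  have Qp: "lam*((1+t*SA*V)*(1+(t+1)*SA*V)) > 0" using SA t lam V
    by (simp add: add_pos_nonneg)
  show ?thesis
  proof (cases "V > s")
    case True
    have P: "pos_part (V - sqrt (lam*theta)) = V - s" unfolding s_def[symmetric] pos_part_def using True by simp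
    have e: "lam*((1+t*SA*V)*(1+(t+1)*SA*V)) = lam + lam*(2*t+1)*SA*V + (lam*(t+1)*t*SA)*(SA*V^2)"
      by (simp add: algebra_simps power2_eq_square)
    have "(lam*(t+1)*t*SA)*(SA*V^2) \<ge> 1*(SA*V^2)" using Dn SA
      by (intro mult_right_mono) auto
    moreover have "lam*(2*t+1)*SA*V \<ge> 0" using lam t SA V by simp
    moreover have "(V-s)^2*SA < SA*V^2"
    proof -
      have "(V-s)^2 < V^2" using True s by (simp add: power2_eq_square algebra_simps)
      then show ?thesis using SA by simp
    qed
    ultimately show ?thesis unfolding P e using lam by linarith
  next
    case False
    then have "pos_part (V - sqrt (lam*theta)) = 0" unfolding s_def pos_part_def by simp
    then show ?thesis using Qp by simp
  qed
qed

lemma tstar_props: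
  fixes SA lam :: real and n :: nat
  assumes SA: "SA > 0" and lam: "lam > 0"
  shows "t_star SA lam \<ge> 0"
    and "int n \<le> t_star SA lam \<Longrightarrow> lam*(real n+1)*real n*SA < 1"
    and "int n \<ge> t_star SA lam + 1 \<Longrightarrow> lam*(real n+1)*real n*SA \<ge> 1"
proof -
  define r where "r = sqrt (1 / (lam * SA) + 1/4)"
  have r2: "r^2 = 1/(lam*SA) + 1/4" unfolding r_def using SA lam by simp
  have rgt: "r > 1/2" unfolding r_def
    using SA lam real_less_rsqrt[of "1/2" "1 / (lam * SA) + 1/4"] by (simp add: power2_eq_square)
  have ts: "t_star SA lam = \<lceil>r - 3/2\<rceil>" unfolding t_star_def r_def by simp
  show "t_star SA lam \<ge> 0" unfolding ts using rgt by (simp add: ceiling_le_iff zero_le_ceiling)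
  have ls: "lam*SA > 0" using SA lam by simp
  show "lam*(real n+1)*real n*SA < 1" if "int n \<le> t_star SA lam"
  proof -
    have "real_of_int (int n) \<le> real_of_int \<lceil>r - 3/2\<rceil>" using that unfolding ts by linarith
    then have "real n < r - 1/2" using ceiling_correct[of "r - 3/2"] by simp
    then have "(real n + 1/2)^2 < r^2" using power_strict_mono[of "real n + 1/2" r 2] by simp
    then have "(real n+1)*real n < 1/(lam*SA)" unfolding r2 by (simp add: power2_eq_square algebra_simps)
    then have "(lam*SA)*((real n+1)*real n) < 1" using ls by (simp add: field_simps)
    then show ?thesis by (simp add: algebra_simps)
  qed
  show "lam*(real n+1)*real n*SA \<ge> 1" if "int n \<ge> t_star SA lam + 1"
  proof -
    have "real_of_int (int n) \<ge> real_of_int \<lceil>r - 3/2\<rceil> + 1" using that unfolding ts by linarith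
    then have "real n \<ge> r - 1/2" using le_of_int_ceiling[of "r - 3/2"] by linarith
    then have "(real n + 1/2)^2 \<ge> r^2" using power_mono[of r "real n + 1/2" 2] rgt by simp
    then have "(real n+1)*real n \<ge> 1/(lam*SA)" unfolding r2 by (simp add: power2_eq_square algebra_simps)
    then have "(lam*SA)*((real n+1)*real n) \<ge> 1" using ls by (simp add: field_simps)
    then show ?thesis by (simp add: algebra_simps)
  qed
qed


lemma Delta_eq:
  assumes SA: "SA > 0" and V: "V > 0"
  shows "Gf SA lam theta V (Suc n) - Gf SA lam theta V n =
     lam - (pos_part (V - sqrt (lam*theta)))^2*SA/((1+real n*SA*V)*(1+(real n+1)*SA*V))"
proof -
  define A where "A = 1+real n*SA*V"
  define C where "C = 1+(real n+1)*SA*V"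
  have A: "A > 0" unfolding A_def using SA V by (simp add: add_pos_nonneg)
  have C: "C > 0" unfolding C_def using SA V by (simp add: add_pos_nonneg)
  have "(real n + 1)*SA/C - real n*SA/A = SA/(A*C)"
    using A C unfolding A_def C_def by (simp add: field_simps)
  then show ?thesis unfolding Gf_def A_def[symmetric] C_def[symmetric]
    by (simp add: A_def C_def algebra_simps)
qed

lemma dec_lem:
  fixes g :: "nat \<Rightarrow> real"
  assumes "\<And>n. n < b \<Longrightarrow> g (Suc n) < g n" and "i < j" and "j \<le> b"
  shows "g j < g i"
  using assms(2,3)
proof (induction j)
  case 0 then show ?case by simp
next
  case (Suc j)
  have "g (Suc j) < g j" using assms(1) Suc.prems by simp
  moreover have "g j \<le> g i"
  proof (cases "i < j")
    case True then show ?thesis using Suc by fastforce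
  next
    case False then have "i = j" using Suc.prems by simp
    then show ?thesis by simp
  qed
  ultimately show ?case by simp
qed

lemma inc_lem:
  fixes g :: "nat \<Rightarrow> real"
  assumes "\<And>n. n \<ge> a \<Longrightarrow> g n < g (Suc n)" and "a \<le> i" and "i < j"
  shows "g i < g j"
  using assms(3)
proof (induction j)
  case 0 then show ?case by simp
next
  case (Suc j)
  have "g j < g (Suc j)" using assms(1,2) Suc.prems by simp
  moreover have "g i \<le> g j"
  proof (cases "i < j")
    case True then show ?thesis using Suc by fastforce
  next
    case False then have "i = j" using Suc.prems by simp
    then show ?thesis by simp
  qed
  ultimately show ?case by simp
qed

lemma argmin_E:
  fixes g :: "nat \<Rightarrow> real"
  assumes dec: "\<And>n. n < k \<Longrightarrow> g (Suc n) < g n" and inc: "\<And>n. n \<ge> k \<Longrightarrow> g n < g (Suc n)"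
    and tB: "t \<le> B" and tmin: "\<forall>u\<le>B. g t \<le> g u"
  shows "t = min k B"
proof (rule ccontr)
  assume ne: "t \<noteq> min k B"
  show False
  proof (cases "t < min k B")
    case True
    have "g (min k B) < g t" using dec_lem[of k g t "min k B"] dec True by simp
    then show False using tmin by (meson min.cobounded2 not_le)
  next
    case False
    then have "t > min k B" using ne by (meson linorder_neqE_nat)
    then have "min k B = k" using tB by simp
    then have "g k < g t" using inc_lem[of k g k t] inc \<open>t > min k B\<close> by simp
    then show False using tmin \<open>min k B = k\<close> by (metis min.cobounded2 not_le)
  qed
qed

lemma argmin_E2:
  fixes g :: "nat \<Rightarrow> real"
  assumes dec: "\<And>n. n < k \<Longrightarrow> g (Suc n) < g n" and eq: "g (Suc k) = g k"
    and inc: "\<And>n. n > k \<Longrightarrow> g n < g (Suc n)"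
  shows "t \<le> B \<Longrightarrow> \<forall>u\<le>B. g t \<le> g u \<Longrightarrow> t = min (Suc k) B \<or> t = min k B"
    and "\<forall>u\<le>B. g (min k B) \<le> g u"
    and "\<forall>u\<le>B. g (min (Suc k) B) \<le> g u"
proof -
  have inc': "\<And>n. n \<ge> Suc k \<Longrightarrow> g n < g (Suc n)" using inc by simp
  have decle: "\<And>i j. i \<le> j \<Longrightarrow> j \<le> k \<Longrightarrow> g j \<le> g i"
    using dec_lem[of k g] dec by (metis le_less order.refl)
  have incle: "\<And>i j. Suc k \<le> i \<Longrightarrow> i \<le> j \<Longrightarrow> g i \<le> g j"
    using inc_lem[of "Suc k" g] inc' by (metis le_less order.refl)
  show A: "\<forall>u\<le>B. g (min k B) \<le> g u"
  proof (intro allI impI)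
    fix u assume u: "u \<le> B"
    show "g (min k B) \<le> g u"
    proof (cases "u \<le> k")
      case True then show ?thesis using decle[of u "min k B"] u by simp
    next
      case False
      then have "min k B = k" using u by simp
      moreover have "g (Suc k) \<le> g u" using incle[of "Suc k" u] False by simp
      ultimately show ?thesis using eq by simp
    qed
  qed
  show "\<forall>u\<le>B. g (min (Suc k) B) \<le> g u"
  proof (cases "k < B")
    case True
    then have "g (min (Suc k) B) = g (min k B)" using eq by simp
    then show ?thesis using A by simp
  next
    case False
    then have "min (Suc k) B = min k B" by simp
    then show ?thesis using A by simp
  qed
  assume tB: "t \<le> B" and tmin: "\<forall>u\<le>B. g t \<le> g u"
  have l: "min k B \<le> t"
  proof (rule ccontr)
    assume "\<not> min k B \<le> t"
    then have "g (min k B) < g t" using dec_lem[of k g t "min k B"] dec by simp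
    then show False using tmin by (meson min.cobounded2 not_le)
  qed
  have r: "t \<le> min (Suc k) B"
  proof (rule ccontr)
    assume a: "\<not> t \<le> min (Suc k) B"
    then have m: "min (Suc k) B = Suc k" using tB by simp
    then have "g (Suc k) < g t" using inc_lem[of "Suc k" g "Suc k" t] inc' a by simp
    then show False using tmin m by (metis min.cobounded2 not_le)
  qed
  show "t = min (Suc k) B \<or> t = min k B" using l r by auto
qed



theorem theorem1:
  fixes SA cTX phi theta lam V SM :: real and B t :: nat
  assumes "SA > 0" and "cTX > 0" and "phi > 0" and "theta = phi / cTX"
    and "B \<ge> 1"
    and "0 < lam" and "lam \<le> lam_th SA theta"
    and "0 < V" and "V \<le> 1"
    and "is_myopic SA lam theta B V t SM"
  shows
    "(V > v_th SA theta lam (t_star SA lam) \<longrightarrow>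
        int t = min (t_star SA lam + 1) (int B))
   \<and> (\<forall>th. 0 \<le> th \<and> th \<le> t_star SA lam \<and> V = v_th SA theta lam th \<longrightarrow>
        (int t = min (th + 1) (int B) \<or> int t = min th (int B))
        \<and> (\<exists>SM1. is_myopic SA lam theta B V (nat (min (th + 1) (int B))) SM1)
        \<and> (\<exists>SM0. is_myopic SA lam theta B V (nat (min th (int B))) SM0))
   \<and> (V \<le> v_th SA theta lam (t_star SA lam) \<and>
       (\<forall>th. 0 \<le> th \<and> th \<le> t_star SA lam \<longrightarrow> V \<noteq> v_th SA theta lam th) \<longrightarrow>
        (\<exists>!th. 0 \<le> th \<and> th \<le> t_star SA lam \<and>
             v_th SA theta lam (th - 1) < V \<and> V < v_th SA theta lam th)
        \<and> (\<forall>th. 0 \<le> th \<and> th \<le> t_star SA lam \<and>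
             v_th SA theta lam (th - 1) < V \<and> V < v_th SA theta lam th \<longrightarrow>
             int t = min th (int B)))
   \<and> (t \<ge> 1 \<longrightarrow> SM = SM_formula SA lam theta V t)
   \<and> is_myopic SA lam theta B V t (SM_formula SA lam theta V t)"
  proof -
  note asm = assms
  have SA: "SA > 0" and lam: "lam > 0" and V: "V > 0" using assms by auto
  have th0: "theta > 0" using assms by simp
  define g where "g = (\<lambda>n. Gf SA lam theta V n)"
  define P where "P = pos_part (V - sqrt (lam*theta))"
  define Q where "Q = (\<lambda>n::nat. (1+real n*SA*V)*(1+(real n+1)*SA*V))"
  define T where "T = t_star SA lam"
  have Qpos: "\<And>n. Q n > 0" unfolding Q_def using SA V by (simp add: add_pos_nonneg)
  have Dl: "\<And>n. g (Suc n) - g n = lam - P^2*SA/Q n"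
    unfolding g_def P_def Q_def using Delta_eq[OF SA V] by simp
  have myo: "\<And>t' SM'. is_myopic SA lam theta B V t' SM' \<longleftrightarrow>
      t' \<le> B \<and> SM' \<ge> 0 \<and> F_obj SA lam theta V t' SM' = g t' \<and> (\<forall>u\<le>B. g t' \<le> g u)"
  proof -
    fix t' SM'
    show "is_myopic SA lam theta B V t' SM' \<longleftrightarrow>
      t' \<le> B \<and> SM' \<ge> 0 \<and> F_obj SA lam theta V t' SM' = g t' \<and> (\<forall>u\<le>B. g t' \<le> g u)"
    proof
      assume m: "is_myopic SA lam theta B V t' SM'"
      then have b: "t' \<le> B" "SM' \<ge> 0" and
        mm: "\<And>u S. u \<le> B \<Longrightarrow> S \<ge> 0 \<Longrightarrow> F_obj SA lam theta V t' SM' \<le> F_obj SA lam theta V u S"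
        unfolding is_myopic_def by auto
      have up: "\<And>u. u \<le> B \<Longrightarrow> F_obj SA lam theta V t' SM' \<le> g u"
        using mm SMf_nonneg[OF SA V] Fmin(2)[OF SA V lam th0] unfolding g_def by metis
      have lo: "g t' \<le> F_obj SA lam theta V t' SM'" using Fmin(1)[OF SA V lam th0 b(2)] unfolding g_def .
      show "t' \<le> B \<and> SM' \<ge> 0 \<and> F_obj SA lam theta V t' SM' = g t' \<and> (\<forall>u\<le>B. g t' \<le> g u)"
        using b up lo by (meson order.trans order_antisym)
    next
      assume r: "t' \<le> B \<and> SM' \<ge> 0 \<and> F_obj SA lam theta V t' SM' = g t' \<and> (\<forall>u\<le>B. g t' \<le> g u)"
      show "is_myopic SA lam theta B V t' SM'" unfolding is_myopic_def
      proof (intro conjI allI impI)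
        fix u S assume u: "u \<le> B" and S: "(0::real) \<le> S"
        have "g u \<le> F_obj SA lam theta V u S" using Fmin(1)[OF SA V lam th0 S] unfolding g_def .
        then show "F_obj SA lam theta V t' SM' \<le> F_obj SA lam theta V u S" using r u by force
      qed (use r in auto)
    qed
  qed
  have myoF: "\<And>t'. t' \<le> B \<Longrightarrow> (\<forall>u\<le>B. g t' \<le> g u) \<Longrightarrow>
      is_myopic SA lam theta B V t' (SM_formula SA lam theta V t')"
    using myo SMf_nonneg[OF SA V] Fmin(2)[OF SA V lam th0] unfolding g_def by simp
  have tB: "t \<le> B" and tmin: "\<forall>u\<le>B. g t \<le> g u" using myo assms(10) by auto
  have vb: "\<And>n::nat. v_th SA theta lam (int n) =
      (sqrt (lam * theta) + lam * (real n + 1/2)) / (1 - lam * (real n + 1) * real n * SA)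
      + sqrt lam * sqrt (sqrt (lam * theta) * (2 * real n + 1)
            + lam * theta * (real n + 1) * real n * SA + lam / 4 + 1 / SA) / (1 - lam * (real n + 1) * real n * SA)"
    unfolding v_th_def by simp
  have sgn: "\<And>n. int n \<le> T \<Longrightarrow> (g (Suc n) < g n \<longleftrightarrow> V > v_th SA theta lam (int n))
       \<and> (g (Suc n) = g n \<longleftrightarrow> V = v_th SA theta lam (int n))"
  proof -
    fix n assume n: "int n \<le> T"
    have Dp: "lam*(real n+1)*real n*SA < 1" using tstar_props(2)[OF SA lam n[unfolded T_def]] .
    have B: "(P^2*SA > lam*Q n \<longleftrightarrow> V > v_th SA theta lam (int n))
       \<and> (P^2*SA = lam*Q n \<longleftrightarrow> V = v_th SA theta lam (int n))"
      using signB[OF SA lam th0 _ Dp V] unfolding vb P_def Q_def by simp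
    have e0: "g (Suc n) < g n \<longleftrightarrow> lam < P^2*SA/Q n" using Dl[of n] by linarith
    have e1: "g (Suc n) < g n \<longleftrightarrow> P^2*SA > lam*Q n"
      unfolding e0 using pos_less_divide_eq[OF Qpos[of n]] by simp
    have e0': "g (Suc n) = g n \<longleftrightarrow> P^2*SA/Q n = lam" using Dl[of n] by linarith
    have e2: "g (Suc n) = g n \<longleftrightarrow> P^2*SA = lam*Q n"
      unfolding e0' using Qpos[of n] by (simp add: divide_eq_eq)
    show "(g (Suc n) < g n \<longleftrightarrow> V > v_th SA theta lam (int n))
       \<and> (g (Suc n) = g n \<longleftrightarrow> V = v_th SA theta lam (int n))" using B e1 e2 by simp
  qed
  have big: "\<And>n. int n \<ge> T + 1 \<Longrightarrow> g n < g (Suc n)"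
  proof -
    fix n assume n: "int n \<ge> T + 1"
    have Dn: "lam*(real n+1)*real n*SA \<ge> 1" using tstar_props(3)[OF SA lam n[unfolded T_def]] .
    have "P^2*SA < lam*Q n" using signC[OF SA lam th0 _ Dn V] unfolding P_def Q_def by simp
    then have "P^2*SA/Q n < lam" using Qpos[of n] by (simp add: divide_less_eq)
    then show "g n < g (Suc n)" using Dl[of n] by simp
  qed
  have mono: "\<And>n m. n \<le> m \<Longrightarrow> g (Suc n) - g n \<le> g (Suc m) - g m"
  proof -
    fix n m :: nat assume nm: "n \<le> m"
    have "Q n \<le> Q m" unfolding Q_def using nm SA V
      by (intro mult_mono add_mono) (auto simp: add_nonneg_nonneg)
    then have "P^2*SA/Q m \<le> P^2*SA/Q n" using Qpos SA
      by (intro divide_left_mono) auto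
    then show "g (Suc n) - g n \<le> g (Suc m) - g m" using Dl by simp
  qed
  have smono: "\<And>n m. P \<noteq> 0 \<Longrightarrow> n < m \<Longrightarrow> g (Suc n) - g n < g (Suc m) - g m"
  proof -
    fix n m :: nat assume P: "P \<noteq> 0" and nm: "n < m"
    have "real n < real m" using nm by simp
    have sv: "SA*V > 0" using SA V by simp
    have a1: "1 + real n*SA*V < 1 + real m*SA*V"
      using mult_strict_right_mono[OF \<open>real n < real m\<close> sv] by (simp add: mult.assoc)
    have a2: "1 + (real n+1)*SA*V < 1 + (real m+1)*SA*V"
      using mult_strict_right_mono[of "real n + 1" "real m + 1", OF _ sv] \<open>real n < real m\<close> by (simp add: mult.assoc)
    have a3: "0 \<le> 1 + (real n+1)*SA*V" using sv by (simp add: add_nonneg_nonneg mult.assoc)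
    have a4: "0 < 1 + real m*SA*V" using sv by (simp add: add_pos_nonneg mult.assoc)
    have "Q n < Q m" unfolding Q_def using mult_strict_mono[OF a1 a2 a4 a3] .
    moreover have "P^2*SA > 0" using P SA by simp
    ultimately have "P^2*SA/Q m < P^2*SA/Q n" using Qpos
      by (intro divide_strict_left_mono) auto
    then show "g (Suc n) - g n < g (Suc m) - g m" using Dl by simp
  qed
  have P0: "\<And>n. P = 0 \<Longrightarrow> g n < g (Suc n)"
  proof -
    fix n assume "P = 0"
    then have "g (Suc n) - g n = lam" using Dl[of n] by simp
    then show "g n < g (Suc n)" using lam by simp
  qed
  have T0: "T \<ge> 0" unfolding T_def using tstar_props(1)[OF SA lam] .
  define TN where "TN = nat T"
  have TN: "int TN = T" unfolding TN_def using T0 by simp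
  have leT: "\<And>n. n \<le> TN \<Longrightarrow> int n \<le> T" using TN by simp
  have gtT: "\<And>n. n \<ge> Suc TN \<Longrightarrow> int n \<ge> T + 1" using TN by simp
  have p1: "V > v_th SA theta lam T \<longrightarrow> int t = min (T + 1) (int B)"
  proof
    assume VT: "V > v_th SA theta lam T"
    have dT: "g (Suc TN) < g TN" using sgn[of TN] VT TN by simp
    have dec: "\<And>n. n < Suc TN \<Longrightarrow> g (Suc n) < g n"
    proof -
      fix n assume "n < Suc TN"
      then have "g (Suc n) - g n \<le> g (Suc TN) - g TN" using mono by simp
      then show "g (Suc n) < g n" using dT by simp
    qed
    have bg: "\<And>n. n \<ge> Suc TN \<Longrightarrow> g n < g (Suc n)" using big gtT by blast
    have "t = min (Suc TN) B" using argmin_E[where g=g and k="Suc TN" and t=t and B=B] dec bg tB tmin by blast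
    then show "int t = min (T + 1) (int B)" using TN by simp
  qed
  have p2: "\<forall>th. 0 \<le> th \<and> th \<le> T \<and> V = v_th SA theta lam th \<longrightarrow>
        (int t = min (th + 1) (int B) \<or> int t = min th (int B))
        \<and> (\<exists>SM1. is_myopic SA lam theta B V (nat (min (th + 1) (int B))) SM1)
        \<and> (\<exists>SM0. is_myopic SA lam theta B V (nat (min th (int B))) SM0)"
  proof (intro allI impI)
    fix th assume h: "0 \<le> th \<and> th \<le> T \<and> V = v_th SA theta lam th"
    define k where "k = nat th"
    have k: "int k = th" unfolding k_def using h by simp
    have eq: "g (Suc k) = g k" using sgn[of k] h k by simp
    have Pn: "P \<noteq> 0" using P0[of k] eq by auto
    have dec: "\<And>n. n < k \<Longrightarrow> g (Suc n) < g n"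
    proof -
      fix n assume "n < k"
      then have "g (Suc n) - g n < g (Suc k) - g k" using smono[OF Pn] by simp
      then show "g (Suc n) < g n" using eq by simp
    qed
    have inc: "\<And>n. n > k \<Longrightarrow> g n < g (Suc n)"
    proof -
      fix n assume "n > k"
      then have "g (Suc k) - g k < g (Suc n) - g n" using smono[OF Pn] by simp
      then show "g n < g (Suc n)" using eq by simp
    qed
    have E1: "t = min (Suc k) B \<or> t = min k B"
      using argmin_E2(1)[where g=g and k=k and t=t and B=B] dec eq inc tB tmin by blast
    have E2: "\<forall>u\<le>B. g (min k B) \<le> g u"
      using argmin_E2(2)[where g=g and k=k and B=B] dec eq inc by blast
    have E3: "\<forall>u\<le>B. g (min (Suc k) B) \<le> g u"
      using argmin_E2(3)[where g=g and k=k and B=B] dec eq inc by blast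
    have c1: "nat (min (th + 1) (int B)) = min (Suc k) B" using k by auto
    have c2: "nat (min th (int B)) = min k B" using k by auto
    have "t = min (Suc k) B \<or> t = min k B" using E1 .
    then have "int t = min (th + 1) (int B) \<or> int t = min th (int B)" using k by auto
    moreover have "is_myopic SA lam theta B V (nat (min (th + 1) (int B))) (SM_formula SA lam theta V (min (Suc k) B))"
      unfolding c1 using myoF E3 by simp
    moreover have "is_myopic SA lam theta B V (nat (min th (int B))) (SM_formula SA lam theta V (min k B))"
      unfolding c2 using myoF E2 by simp
    ultimately show "(int t = min (th + 1) (int B) \<or> int t = min th (int B))
        \<and> (\<exists>SM1. is_myopic SA lam theta B V (nat (min (th + 1) (int B))) SM1)
        \<and> (\<exists>SM0. is_myopic SA lam theta B V (nat (min th (int B))) SM0)" by blast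
  qed
  have p3: "V \<le> v_th SA theta lam T \<and>
       (\<forall>th. 0 \<le> th \<and> th \<le> T \<longrightarrow> V \<noteq> v_th SA theta lam th) \<longrightarrow>
        (\<exists>!th. 0 \<le> th \<and> th \<le> T \<and>
             v_th SA theta lam (th - 1) < V \<and> V < v_th SA theta lam th)
        \<and> (\<forall>th. 0 \<le> th \<and> th \<le> T \<and>
             v_th SA theta lam (th - 1) < V \<and> V < v_th SA theta lam th \<longrightarrow>
             int t = min th (int B))"
  proof
    assume h: "V \<le> v_th SA theta lam T \<and> (\<forall>th. 0 \<le> th \<and> th \<le> T \<longrightarrow> V \<noteq> v_th SA theta lam th)"
    have neq: "\<And>n. int n \<le> T \<Longrightarrow> g (Suc n) \<noteq> g n" using sgn h by auto
    have lt: "\<And>n. int n \<le> T \<Longrightarrow> (g n < g (Suc n) \<longleftrightarrow> V < v_th SA theta lam (int n))"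
    proof -
      fix n assume n: "int n \<le> T"
      have "V \<noteq> v_th SA theta lam (int n)" using h n by simp
      then show "g n < g (Suc n) \<longleftrightarrow> V < v_th SA theta lam (int n)" using sgn[OF n] neq[OF n] by auto
    qed
    have gtn: "\<And>n. int n \<le> T \<Longrightarrow> (g (Suc n) < g n \<longleftrightarrow> V > v_th SA theta lam (int n))"
      using sgn by auto
    have dT: "g TN < g (Suc TN)" using lt[of TN] h TN by (simp add: order.not_eq_order_implies_strict)
    define k where "k = (LEAST n. g n < g (Suc n))"
    have kT: "k \<le> TN" unfolding k_def using dT by (rule Least_le)
    have dk: "g k < g (Suc k)" unfolding k_def using dT by (rule LeastI)
    have dec: "\<And>n. n < k \<Longrightarrow> g (Suc n) < g n"
    proof -
      fix n assume n: "n < k"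
      have "\<not> g n < g (Suc n)" using n unfolding k_def by (rule not_less_Least)
      moreover have "g (Suc n) \<noteq> g n" using neq[of n] leT[of n] n kT by simp
      ultimately show "g (Suc n) < g n" by simp
    qed
    have inc: "\<And>n. n \<ge> k \<Longrightarrow> g n < g (Suc n)"
    proof -
      fix n assume "n \<ge> k"
      then have "g (Suc k) - g k \<le> g (Suc n) - g n" using mono by simp
      then show "g n < g (Suc n)" using dk by simp
    qed
    have vm1: "v_th SA theta lam (-1) = 0" unfolding v_th_def by simp
    have cond: "\<And>th. (0 \<le> th \<and> th \<le> T \<and> v_th SA theta lam (th - 1) < V \<and> V < v_th SA theta lam th)
        \<longleftrightarrow> th = int k"
    proof
      fix th assume c: "0 \<le> th \<and> th \<le> T \<and> v_th SA theta lam (th - 1) < V \<and> V < v_th SA theta lam th"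
      define n where "n = nat th"
      have n: "int n = th" unfolding n_def using c by simp
      have "g n < g (Suc n)" using lt[of n] c n by simp
      then have kn: "k \<le> n" unfolding k_def by (rule Least_le)
      show "th = int k"
      proof (rule ccontr)
        assume "th \<noteq> int k"
        then have kn': "k < n" using kn n by simp
        then have n1: "int (n - 1) = th - 1" using n by simp
        have "v_th SA theta lam (int (n-1)) < V" using c n1 by simp
        moreover have "int (n-1) \<le> T" using n1 c by simp
        ultimately have "g (Suc (n-1)) < g (n-1)" using gtn[of "n-1"] by simp
        moreover have "g (n-1) < g (Suc (n-1))" using inc[of "n-1"] kn' by linarith
        ultimately show False by simp
      qed
    next
      fix th assume th: "th = int k"
      have a1: "0 \<le> th \<and> th \<le> T" using th kT TN by simp
      have a2: "V < v_th SA theta lam th" using lt[of k] dk th kT TN by simp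
      have a3: "v_th SA theta lam (th - 1) < V"
      proof (cases "k = 0")
        case True then show ?thesis using th vm1 V by simp
      next
        case False
        then have n1: "int (k - 1) = th - 1" using th by simp
        have "g (Suc (k-1)) < g (k-1)" using dec[of "k-1"] False by simp
        then have "v_th SA theta lam (int (k-1)) < V" using gtn[of "k-1"] kT TN by simp
        then show ?thesis using n1 by simp
      qed
      show "0 \<le> th \<and> th \<le> T \<and> v_th SA theta lam (th - 1) < V \<and> V < v_th SA theta lam th"
        using a1 a2 a3 by simp
    qed
    have tk: "t = min k B" using argmin_E[where g=g and k=k and t=t and B=B] dec inc tB tmin by blast
    show "(\<exists>!th. 0 \<le> th \<and> th \<le> T \<and>
             v_th SA theta lam (th - 1) < V \<and> V < v_th SA theta lam th)
        \<and> (\<forall>th. 0 \<le> th \<and> th \<le> T \<and>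
             v_th SA theta lam (th - 1) < V \<and> V < v_th SA theta lam th \<longrightarrow>
             int t = min th (int B))"
      using cond tk by auto
  qed
  have p4: "t \<ge> 1 \<longrightarrow> SM = SM_formula SA lam theta V t"
  proof
    assume t1: "t \<ge> 1"
    have "SM \<ge> 0" "F_obj SA lam theta V t SM = g t" using myo assms(10) by auto
    then show "SM = SM_formula SA lam theta V t" using Fmin(3)[OF SA V lam th0 t1] unfolding g_def by simp
  qed
  have p5: "is_myopic SA lam theta B V t (SM_formula SA lam theta V t)" using myoF tB tmin by simp
  show ?thesis using p1 p2 p3 p4 p5 unfolding T_def by blast
qed

end
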